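(* Let $f,g\in H^2_\tau(\mathcal S)$. Then $|f|=|g|$ on $\mathbb R$ if and only if there exist holomorphic functions $u,v$ on $\mathcal S$ such that $f=uv$ and $g=uv^*$.
   Context: $\mathcal S=\{z\in\mathbb C:|\mathrm{Im}\,z|<1\}$; $H^2_\tau(\mathcal S)$ is the space of holomorphic $f$ on $\mathcal S$ with $\sup_{|y|<1}\int_{\mathbb R}|f(t+iy)|^2\,\mathrm dt<\infty$. For $v$ holomorphic on $\mathcal S$, $v^*(z)=\overline{v(\bar z)}$. *)

theory Defs
  imports "HOL-Analysis.Analysis"
begin

definition strip :: "complex set" where
  "strip = {z. \<bar>Im z\<bar> < 1}"

definition H2_strip :: "(complex \<Rightarrow> complex) set" where
  "H2_strip = {f. f holomorphic_on strip \<and>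
     (SUP y\<in>{-1<..<(1::real)}. \<integral>\<^sup>+ t. ennreal ((cmod (f (Complex t y)))\<^sup>2) \<partial>lborel) < \<infinity>}"

definition star_fun :: "(complex \<Rightarrow> complex) \<Rightarrow> complex \<Rightarrow> complex" where
  "star_fun v z = cnj (v (cnj z))"

end

theory Submission imports Defs "HOL-Complex_Analysis.Complex_Analysis" begin

locale wprod =
  fixes A :: "complex set" and c \<beta> :: "nat \<Rightarrow> complex" and p :: "nat \<Rightarrow> nat"
  assumes A_open: "open A"
  assumes beta_out: "\<And>n. \<beta> n \<notin> A"
  assumes p_ge: "\<And>n. n \<le> p n"
  assumes small: "\<And>K. compact K \<Longrightarrow> K \<subseteq> A \<Longrightarrow>
     eventually (\<lambda>n. \<forall>z\<in>K. norm (c n / (z - \<beta> n)) \<le> 1/2) sequentially"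
begin

definition F :: "nat \<Rightarrow> complex \<Rightarrow> complex" where
  "F n z = weierstrass_factor (p n) (c n / (z - \<beta> n))"

definition W :: "complex \<Rightarrow> complex" where
  "W z = (\<Prod>n. F n z)"

lemma beta_ne: "z \<in> A \<Longrightarrow> z - \<beta> n \<noteq> 0"
  using beta_out[of n] by auto

lemma F_holo: "F n holomorphic_on A"
  unfolding F_def using beta_ne by (auto intro!: holomorphic_intros)

lemma F_cont: "continuous_on A (F n)"
  by (rule holomorphic_on_imp_continuous_on[OF F_holo])

lemma F_bound:
  assumes "norm (c n / (z - \<beta> n)) \<le> 1/2"
  shows "norm (F n z - 1) \<le> 3 * (1/2) ^ Suc n"
proof -
  have "norm (F n z - 1) \<le> 3 * norm (c n / (z - \<beta> n)) ^ Suc (p n)"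
    unfolding F_def by (rule weierstrass_factor_bound[OF assms])
  also have "\<dots> \<le> 3 * (1/2) ^ Suc (p n)"
    by (intro mult_left_mono power_mono assms) auto
  also have "\<dots> \<le> 3 * (1/2) ^ Suc n"
    using p_ge[of n] by (intro mult_left_mono power_decreasing) auto
  finally show ?thesis .
qed

lemma summable_bound: "summable (\<lambda>n. 3 * (1/2::real) ^ Suc n)"
  by (intro summable_mult summable_Suc_iff[THEN iffD2] summable_geometric) auto

lemma abs_convergent:
  assumes "z \<in> A"
  shows "abs_convergent_prod (\<lambda>n. F n z)"
  unfolding abs_convergent_prod_conv_summable
proof (rule summable_comparison_test_ev)
  have "eventually (\<lambda>n. \<forall>w\<in>{z}. norm (c n / (w - \<beta> n)) \<le> 1/2) sequentially"
    using assms by (intro small) auto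
  thus "eventually (\<lambda>n. norm (norm (F n z - 1)) \<le> 3 * (1/2) ^ Suc n) sequentially"
    by eventually_elim (use F_bound in auto)
qed (rule summable_bound)

lemma has_prod: "z \<in> A \<Longrightarrow> (\<lambda>n. F n z) has_prod W z"
  using abs_convergent[of z] abs_convergent_prod_imp_convergent_prod unfolding W_def
  by (simp add: convergent_prod_has_prod abs_convergent_prod_imp_convergent_prod)

lemma uniform_limit:
  assumes "compact K" "K \<subseteq> A"
  shows "uniform_limit K (\<lambda>N z. \<Prod>n<N. F n z) W sequentially"
proof -
  have "uniformly_convergent_on K (\<lambda>N z. \<Prod>n<N. F n z)"
  proof (rule uniformly_convergent_on_prod')
    show "uniformly_convergent_on K (\<lambda>N z. \<Sum>n<N. norm (F n z - 1))"
    proof (rule Weierstrass_m_test'_ev)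
      show "eventually (\<lambda>n. \<forall>z\<in>K. norm (norm (F n z - 1)) \<le> 3 * (1/2) ^ Suc n) sequentially"
        using small[OF assms] by eventually_elim (use F_bound in auto)
    qed (rule summable_bound)
  next
    show "compact K" by (rule assms(1))
  next
    fix n show "continuous_on K (F n)" using F_cont assms(2) by (rule continuous_on_subset)
  qed
  then obtain g where g: "uniform_limit K (\<lambda>N z. \<Prod>n<N. F n z) g sequentially"
    by (auto simp: uniformly_convergent_on_def)
  have "g z = W z" if z: "z \<in> K" for z
  proof -
    have zA: "z \<in> A" using z assms(2) by blast
    have 1: "(\<lambda>N. \<Prod>n<N. F n z) \<longlonglongrightarrow> g z"
      using g z by (rule tendsto_uniform_limitI)
    have "(\<lambda>N. \<Prod>n\<le>N. F n z) \<longlonglongrightarrow> W z"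
      unfolding W_def
      by (rule convergent_prod_LIMSEQ[OF abs_convergent_prod_imp_convergent_prod[OF abs_convergent[OF zA]]])
    hence "(\<lambda>N. \<Prod>n<Suc N. F n z) \<longlonglongrightarrow> W z"
      by (simp add: lessThan_Suc_atMost)
    hence 2: "(\<lambda>N. \<Prod>n<N. F n z) \<longlonglongrightarrow> W z"
      by (rule LIMSEQ_imp_Suc)
    show ?thesis using 1 2 by (rule LIMSEQ_unique)
  qed
  with g show ?thesis
    by (metis (no_types, lifting) uniform_limit_cong')
qed

lemma holomorphic: "W holomorphic_on A"
proof (rule holomorphic_uniform_sequence[OF A_open])
  show "(\<lambda>z. \<Prod>n<N. F n z) holomorphic_on A" for N
    using F_holo by (intro holomorphic_intros) auto
  fix z assume z: "z \<in> A"
  obtain d where d: "d > 0" "cball z d \<subseteq> A"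
    using A_open z open_contains_cball by blast
  thus "\<exists>d>0. cball z d \<subseteq> A \<and> uniform_limit (cball z d) (\<lambda>N z. \<Prod>n<N. F n z) W sequentially"
    using uniform_limit[of "cball z d"] by auto
qed


lemma F_zero_iff: "z \<in> A \<Longrightarrow> F n z = 0 \<longleftrightarrow> \<beta> n + c n = z"
  using beta_ne[of z n] unfolding F_def
  by (auto simp: field_simps)

lemma zero: "z \<in> A \<Longrightarrow> W z = 0 \<longleftrightarrow> (\<exists>n. \<beta> n + c n = z)"
  using has_prod_eq_0_iff[OF has_prod, of z] F_zero_iff[of z] by auto

lemma finite_occs: "z \<in> A \<Longrightarrow> finite {n. \<beta> n + c n = z}"
proof -
  assume z: "z \<in> A"
  have "eventually (\<lambda>n. \<forall>w\<in>{z}. norm (c n / (w - \<beta> n)) \<le> 1/2) sequentially"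
    using z by (intro small) auto
  then obtain N where N: "\<And>n. n \<ge> N \<Longrightarrow> norm (c n / (z - \<beta> n)) \<le> 1/2"
    by (auto simp: eventually_at_top_linorder)
  have "n < N" if "\<beta> n + c n = z" for n
  proof (rule ccontr)
    assume "\<not> n < N"
    hence "norm (c n / (z - \<beta> n)) \<le> 1/2" using N by auto
    moreover have "c n / (z - \<beta> n) = 1" using that beta_ne[OF z, of n] by (auto simp: field_simps)
    ultimately show False by simp
  qed
  hence "{n. \<beta> n + c n = z} \<subseteq> {..<N}" by auto
  thus ?thesis using finite_subset by blast
qed

lemma zorder_F:
  assumes "z \<in> A" "\<beta> n + c n = z"
  shows "zorder (F n) z = 1"
proof -
  define g where "g = (\<lambda>w. exp (\<Sum>k=1..p n. (c n / (w - \<beta> n)) ^ k / of_nat k) / (w - \<beta> n))"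
  have "zorder (F n) z = 1"
  proof (rule zorder_eqI[OF A_open assms(1)])
    show "g holomorphic_on A" unfolding g_def using beta_ne by (auto intro!: holomorphic_intros)
    show "g z \<noteq> 0" unfolding g_def using beta_ne[OF assms(1)] by auto
    fix w assume w: "w \<in> A" "w \<noteq> z"
    have "F n w = (1 - c n / (w - \<beta> n)) * exp (\<Sum>k=1..p n. (c n / (w - \<beta> n)) ^ k / of_nat k)"
      by (simp add: F_def weierstrass_factor_def)
    also have "1 - c n / (w - \<beta> n) = (w - z) / (w - \<beta> n)"
      using beta_ne[OF w(1), of n] assms(2) by (auto simp: field_simps)
    finally show "F n w = g w * (w - z) powi 1" by (simp add: g_def)
  qed
  thus ?thesis .
qed

lemma zorder: 
  assumes z: "z \<in> A"
  shows "zorder W z = card {n. \<beta> n + c n = z}"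
proof -
  obtain N where N: "{n. \<beta> n + c n = z} \<subseteq> {..N}"
    using finite_occs[OF z] by (meson finite_nat_iff_bounded_le)
  define Z where "Z = {n. \<beta> n + c n = z}"
  define h1 where "h1 = (\<lambda>w. (\<Prod>n\<in>{..N} - Z. F n w) * (\<Prod>n. F (n + Suc N) w))"
  define h2 where "h2 = (\<lambda>w. (\<Prod>n\<in>{..N} \<inter> Z. F n w))"
  have Zsub: "Z \<subseteq> {..N}" using N by (simp add: Z_def)
  interpret h: wprod A "\<lambda>n. c (n + Suc N)" "\<lambda>n. \<beta> (n + Suc N)" "\<lambda>n. p (n + Suc N)"
  proof
    fix K :: "complex set" assume K: "compact K" "K \<subseteq> A"
    show "eventually (\<lambda>n. \<forall>z\<in>K. norm (c (n + Suc N) / (z - \<beta> (n + Suc N))) \<le> 1/2) sequentially"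
      using eventually_sequentially_seg[THEN iffD2, OF small[OF K]] .
  next
    fix n show "n \<le> p (n + Suc N)" using p_ge[of "n + Suc N"] by linarith
  qed (use A_open beta_out in auto)
  have hF: "h.F n w = F (n + Suc N) w" for n w
    unfolding h.F_def F_def by (simp add: add.commute)
  have tail_prod: "(\<lambda>n. F (n + Suc N) w) has_prod (\<Prod>n. F (n + Suc N) w)" if "w \<in> A" for w
    using h.has_prod[OF that] unfolding hF h.W_def by simp
  have f_eq: "W w = h1 w * h2 w" if w: "w \<in> A" for w
  proof -
    have "W w = (\<Prod>n<Suc N. F n w) * (\<Prod>n. F (n + Suc N) w)"
    proof (rule has_prod_unique2)
      show "(\<lambda>n. F n w) has_prod ((\<Prod>n<Suc N. F n w) * (\<Prod>n. F (n + Suc N) w))"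
        by (intro has_prod_ignore_initial_segment' abs_convergent_prod_imp_convergent_prod abs_convergent w)
      show "(\<lambda>n. F n w) has_prod W w" by (rule has_prod[OF w])
    qed
    also have "{..<Suc N} = ({..N} - Z) \<union> ({..N} \<inter> Z)"
      by auto
    also have "(\<Prod>k\<in>\<dots>. F k w) = (\<Prod>k\<in>{..N} - Z. F k w) * (\<Prod>k\<in>{..N} \<inter> Z. F k w)"
      by (intro prod.union_disjoint) auto
    finally show ?thesis
      by (simp add: h1_def h2_def mult_ac)
  qed
  have h1_holo: "h1 holomorphic_on A"
  proof -
    have "(\<lambda>w. \<Prod>n. F (n + Suc N) w) holomorphic_on A"
      using h.holomorphic unfolding h.W_def hF .
    thus ?thesis unfolding h1_def using F_holo by (intro holomorphic_intros) auto
  qed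
  have ana_h1: "h1 analytic_on {z}"
    using h1_holo A_open z analytic_at by blast
  have ana_h2: "h2 analytic_on {z}"
  proof -
    have "h2 holomorphic_on A" unfolding h2_def using F_holo by (intro holomorphic_intros) auto
    thus ?thesis using A_open z analytic_at by blast
  qed
  have ev_nz: "eventually (\<lambda>w. W w \<noteq> 0) (at z)"
  proof -
    obtain r where r: "r > 0" "cball z r \<subseteq> A"
      using A_open z open_contains_cball by blast
    obtain N' where N': "\<And>n w. n \<ge> N' \<Longrightarrow> w \<in> cball z r \<Longrightarrow> norm (c n / (w - \<beta> n)) \<le> 1/2"
      using small[OF compact_cball r(2)] unfolding eventually_at_top_linorder by blast
    define S0 where "S0 = (\<lambda>n. \<beta> n + c n) ` {..<N'}"
    have "finite S0" by (simp add: S0_def)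
    have op: "open (ball z r - (S0 - {z}))"
      using \<open>finite S0\<close> by (intro open_Diff finite_imp_closed) auto
    have "eventually (\<lambda>w. w \<in> (ball z r - (S0 - {z})) - {z}) (at z)"
      using r(1) by (intro eventually_at_in_open op) auto
    thus ?thesis
    proof eventually_elim
      case (elim w)
      have wA: "w \<in> A" using elim r(2) by auto
      have "\<beta> n + c n \<noteq> w" for n
      proof
        assume eq: "\<beta> n + c n = w"
        show False
        proof (cases "n \<ge> N'")
          case True
          hence "norm (c n / (w - \<beta> n)) \<le> 1/2" using N' elim by auto
          moreover have "c n / (w - \<beta> n) = 1" using eq beta_ne[OF wA, of n] by (auto simp: field_simps)
          ultimately show False by simp
        next
          case False
          hence "w \<in> S0" using eq by (auto simp: S0_def)
          thus False using elim by auto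
        qed
      qed
      thus ?case using zero[OF wA] by auto
    qed
  qed
  have "eventually (\<lambda>w. w \<in> A) (at z)"
    using A_open z by (intro eventually_at_in_open') auto
  hence "eventually (\<lambda>w. W w = h1 w * h2 w) (at z)"
    by eventually_elim (rule f_eq)
  hence "zorder W z = zorder (\<lambda>w. h1 w * h2 w) z"
    by (intro zorder_cong) (auto simp: f_eq z)
  also have "\<dots> = zorder h1 z + zorder h2 z"
  proof (rule zorder_times_analytic[OF ana_h1 ana_h2])
    show "eventually (\<lambda>w. h1 w * h2 w \<noteq> 0) (at z)"
      using ev_nz \<open>eventually (\<lambda>w. W w = h1 w * h2 w) (at z)\<close>
      by eventually_elim auto
  qed
  also have "zorder h2 z = (\<Sum>n\<in>{..N} \<inter> Z. zorder (F n) z)"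
    unfolding h2_def
  proof (rule zorder_prod_analytic)
    show "F n analytic_on {z}" for n using F_holo A_open z analytic_at by blast
    have "eventually (\<lambda>w. w \<in> A - {z}) (at z)"
      using A_open z by (intro eventually_at_in_open) auto
    thus "eventually (\<lambda>w. (\<Prod>n\<in>{..N} \<inter> Z. F n w) \<noteq> 0) (at z)"
      by eventually_elim (auto simp: F_zero_iff Z_def)
  qed
  also have "h1 z \<noteq> 0"
  proof -
    have "(\<Prod>n\<in>{..N} - Z. F n z) \<noteq> 0"
      using z by (auto simp: F_zero_iff Z_def)
    moreover have "(\<Prod>n. F (n + Suc N) z) \<noteq> 0"
    proof
      assume "(\<Prod>n. F (n + Suc N) z) = 0"
      then obtain n where "F (n + Suc N) z = 0"
        using has_prod_eq_0_iff[OF tail_prod[OF z]] by auto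
      hence "n + Suc N \<in> Z" using z by (auto simp: F_zero_iff Z_def)
      thus False using Zsub by auto
    qed
    ultimately show ?thesis by (simp add: h1_def)
  qed
  hence "zorder h1 z = 0"
    by (intro zorder_eq_0I ana_h1)
  also have "(\<Sum>n\<in>{..N} \<inter> Z. zorder (F n) z) = (\<Sum>n\<in>{..N} \<inter> Z. 1)"
    by (intro sum.cong refl zorder_F z) (auto simp: Z_def)
  also have "{..N} \<inter> Z = Z"
    using Zsub by blast
  finally show ?thesis
    by (simp add: Z_def)
qed

end

definition Kr :: "real \<Rightarrow> complex set" where
  "Kr r = {z. \<bar>Re z\<bar> \<le> r \<and> \<bar>Im z\<bar> \<le> 1 - 1/r}"

definition bet :: "complex \<Rightarrow> complex" where
  "bet a = Complex (Re a) (if Im a \<ge> 0 then 1 else -1)"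

lemma bet_not_strip: "bet a \<notin> strip"
  by (simp add: bet_def strip_def)

lemma norm_a_bet: "\<bar>Im a\<bar> < 1 \<Longrightarrow> norm (a - bet a) = 1 - \<bar>Im a\<bar>"
proof -
  assume h: "\<bar>Im a\<bar> < 1"
  have "a - bet a = Complex 0 (Im a - (if Im a \<ge> 0 then 1 else -1))"
    by (simp add: bet_def complex_eq_iff)
  thus ?thesis using h by (auto simp: cmod_def)
qed

lemma ratio_bound:
  assumes r: "r \<ge> 1" and z: "z \<in> Kr r" and a: "\<bar>Im a\<bar> < 1" and na: "a \<notin> Kr (2*r+2)"
  shows "norm ((a - bet a) / (z - bet a)) \<le> 1/2"
proof -
  have zr: "\<bar>Re z\<bar> \<le> r" and zi: "\<bar>Im z\<bar> \<le> 1 - 1/r" using z by (auto simp: Kr_def)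
  have d1: "norm (z - bet a) \<ge> 1/r"
  proof -
    have "\<bar>Im (z - bet a)\<bar> \<le> norm (z - bet a)" by (rule abs_Im_le_cmod)
    moreover have "\<bar>Im (z - bet a)\<bar> \<ge> 1 - \<bar>Im z\<bar>" by (auto simp: bet_def)
    ultimately show ?thesis using zi by linarith
  qed
  have d2: "norm (z - bet a) \<ge> \<bar>Re a\<bar> - r"
  proof -
    have "\<bar>Re (z - bet a)\<bar> \<le> norm (z - bet a)" by (rule abs_Re_le_cmod)
    moreover have "Re (z - bet a) = Re z - Re a" by (simp add: bet_def)
    ultimately show ?thesis using zr by linarith
  qed
  have pos: "norm (z - bet a) > 0" using d1 r by (smt (verit) divide_pos_pos)
  have na': "\<bar>Re a\<bar> > 2*r+2 \<or> \<bar>Im a\<bar> > 1 - 1/(2*r+2)" using na by (auto simp: Kr_def)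
  have "norm (a - bet a) \<le> 1/2 * norm (z - bet a)"
  proof (cases "\<bar>Im a\<bar> > 1 - 1/(2*r+2)")
    case True
    hence "norm (a - bet a) < 1/(2*r+2)" using norm_a_bet[OF a] by simp
    also have "1/(2*r+2) \<le> 1/2 * (1/r)" using r by (simp add: field_simps)
    also have "\<dots> \<le> 1/2 * norm (z - bet a)" using d1 by simp
    finally show ?thesis by simp
  next
    case False
    hence "\<bar>Re a\<bar> > 2*r+2" using na' by auto
    hence "norm (z - bet a) \<ge> 2" using d2 r by linarith
    moreover have "norm (a - bet a) \<le> 1" using norm_a_bet[OF a] by simp
    ultimately show ?thesis by simp
  qed
  thus ?thesis using pos by (simp add: norm_divide divide_le_eq)
qed

lemma Kr_compact: "compact (Kr r)"
unfolding compact_eq_bounded_closed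
proof (intro conjI)
  show "bounded (Kr r)"
  proof -
    have "norm z \<le> \<bar>Re z\<bar> + \<bar>Im z\<bar>" for z :: complex by (rule cmod_le)
    hence "norm z \<le> r + \<bar>1 - 1/r\<bar>" if "z \<in> Kr r" for z using that by (smt (verit, best) Kr_def mem_Collect_eq)
    thus ?thesis unfolding bounded_iff by blast
  qed
  show "closed (Kr r)" unfolding Kr_def
    by (intro closed_Collect_conj closed_Collect_le continuous_intros)
qed

lemma Kr_strip: "r \<ge> 1 \<Longrightarrow> Kr r \<subseteq> strip"
proof
  fix z assume "r \<ge> 1" "z \<in> Kr r"
  moreover have "1/r > 0" using \<open>r \<ge> 1\<close> by simp
  ultimately show "z \<in> strip" unfolding Kr_def strip_def by (simp, linarith)
qed

lemma compact_in_Kr: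
  assumes "compact K" "K \<subseteq> strip"
  obtains r where "r \<ge> 1" "K \<subseteq> Kr r"
proof (cases "K = {}")
  case True thus ?thesis using that[of 1] by auto
next
  case False
  obtain w where w: "w \<in> K" "\<And>y. y \<in> K \<Longrightarrow> \<bar>Im y\<bar> \<le> \<bar>Im w\<bar>"
  proof -
    have "continuous_on K (\<lambda>z. \<bar>Im z\<bar>)" by (intro continuous_intros)
    from continuous_attains_sup[OF assms(1) False this] show ?thesis using that by blast
  qed
  have wi: "\<bar>Im w\<bar> < 1" using w(1) assms(2) by (auto simp: strip_def)
  obtain B where B: "\<And>y. y \<in> K \<Longrightarrow> norm y \<le> B"
    using compact_imp_bounded[OF assms(1)] unfolding bounded_iff by blast
  define r where "r = max 1 (max B (1 / (1 - \<bar>Im w\<bar>)))"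
  have r1: "r \<ge> 1" by (simp add: r_def)
  have "K \<subseteq> Kr r"
  proof
    fix y assume y: "y \<in> K"
    have "\<bar>Re y\<bar> \<le> r" using B[OF y] abs_Re_le_cmod[of y] by (simp add: r_def)
    moreover have "\<bar>Im y\<bar> \<le> 1 - 1/r"
    proof -
      have "1/r \<le> 1 / (1 / (1 - \<bar>Im w\<bar>))"
        using wi by (intro divide_left_mono) (auto simp: r_def)
      also have "\<dots> = 1 - \<bar>Im w\<bar>" by simp
      finally show ?thesis using w(2)[OF y] by linarith
    qed
    ultimately show "y \<in> Kr r" by (simp add: Kr_def)
  qed
  thus ?thesis using that r1 by blast
qed


lemma Kr_mono: "0 < r \<Longrightarrow> r \<le> r' \<Longrightarrow> Kr r \<subseteq> Kr r'"
proof
  fix z assume h: "0 < r" "r \<le> r'" "z \<in> Kr r"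
  have "1/r' \<le> 1/r" using h by (intro divide_left_mono) auto
  thus "z \<in> Kr r'" using h by (auto simp: Kr_def)
qed

lemma open_strip: "open strip"
  unfolding strip_def by (intro open_Collect_less continuous_intros)

lemma strip_weierstrass:
  fixes V :: "complex \<Rightarrow> nat"
  assumes fin: "\<And>K. compact K \<Longrightarrow> K \<subseteq> strip \<Longrightarrow> finite {z\<in>K. V z > 0}"
  obtains v where "v holomorphic_on strip" "\<And>z. z \<in> strip \<Longrightarrow> v z = 0 \<longleftrightarrow> V z > 0"
    "\<And>z. z \<in> strip \<Longrightarrow> zorder v z = int (V z)"
proof -
  define P where "P = {(z,k). z \<in> strip \<and> k < V z}"
  have finP: "finite (P \<inter> (K \<times> UNIV))" if K: "compact K" "K \<subseteq> strip" for K
  proof -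
    have "P \<inter> (K \<times> UNIV) \<subseteq> (\<Union>z\<in>{z\<in>K. V z > 0}. {z} \<times> {..<V z})"
      by (auto simp: P_def)
    moreover have "finite (\<Union>z\<in>{z\<in>K. V z > 0}. {z} \<times> {..<V z})"
      using fin[OF K] by (intro finite_UN_I) auto
    ultimately show ?thesis using finite_subset by blast
  qed
  have "P \<subseteq> (\<Union>n::nat. P \<inter> (Kr (real n + 1) \<times> UNIV))"
  proof
    fix x assume x: "x \<in> P"
    obtain z k where xz: "x = (z,k)" by (cases x)
    have "z \<in> strip" using x xz by (auto simp: P_def)
    then obtain r where r: "r \<ge> 1" "{z} \<subseteq> Kr r"
      using compact_in_Kr[of "{z}"] by auto
    have "Kr r \<subseteq> Kr (real (nat \<lceil>r\<rceil>) + 1)"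
      using r(1) by (intro Kr_mono) linarith+
    thus "x \<in> (\<Union>n::nat. P \<inter> (Kr (real n + 1) \<times> UNIV))"
      using r x xz by blast
  qed
  moreover have "countable (\<Union>n::nat. P \<inter> (Kr (real n + 1) \<times> UNIV))"
  proof (rule countable_UN)
    fix n :: nat
    have "finite (P \<inter> (Kr (real n + 1) \<times> UNIV))"
      by (rule finP[OF Kr_compact Kr_strip]) simp
    thus "countable (P \<inter> (Kr (real n + 1) \<times> UNIV))" by (rule countable_finite)
  qed simp
  ultimately have cP: "countable P" using countable_subset by blast
  define Q :: "(complex \<times> nat + nat) set" where "Q = Inl ` P \<union> range Inr"
  have "countable Q" unfolding Q_def using cP by auto
  moreover have "infinite Q"
  proof
    assume "finite Q"
    hence "finite (range (Inr :: nat \<Rightarrow> complex \<times> nat + nat))"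
      unfolding Q_def by (rule finite_subset[rotated]) auto
    thus False using finite_imageD[of Inr "UNIV :: nat set"] by auto
  qed
  ultimately obtain e :: "nat \<Rightarrow> complex \<times> nat + nat" where e: "bij_betw e UNIV Q"
    using countable_infiniteE' by blast
  have e_inj: "inj e" and e_range: "range e = Q" using e by (auto simp: bij_betw_def)
  define cc where "cc = (\<lambda>n. case e n of Inl (a,k) \<Rightarrow> a - bet a | Inr _ \<Rightarrow> 0)"
  define bb where "bb = (\<lambda>n. case e n of Inl (a,k) \<Rightarrow> bet a | Inr _ \<Rightarrow> \<i> * 2)"
  have bbcc: "bb n + cc n = (case e n of Inl (a,k) \<Rightarrow> a | Inr _ \<Rightarrow> \<i> * 2)" for n
    by (auto simp: bb_def cc_def split: sum.splits)
  have eP: "e n = Inl (a,k) \<Longrightarrow> (a,k) \<in> P" for n a k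
    using e_range by (metis Inl_Inr_False Q_def UNIV_I Un_iff image_eqI image_iff sum.inject(1))
  interpret w: wprod strip cc bb id
  proof
    show "open strip" by (rule open_strip)
    fix n show "bb n \<notin> strip" using bet_not_strip by (auto simp: bb_def strip_def split: sum.splits)
  next
    fix n :: nat show "n \<le> id n" by simp
  next
    fix K assume K: "compact K" "K \<subseteq> strip"
    obtain r where r: "r \<ge> 1" "K \<subseteq> Kr r" using compact_in_Kr[OF K] by blast
    define K' where "K' = Kr (2*r+2)"
    have "finite (e -` (Inl ` (P \<inter> (K' \<times> UNIV))))"
      using finP[of K'] Kr_compact Kr_strip[of "2*r+2"] r(1)
      by (intro finite_vimageI e_inj finite_imageI) (auto simp: K'_def)
    then obtain N where N0: "e -` (Inl ` (P \<inter> (K' \<times> UNIV))) \<subseteq> {..<N}"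
      unfolding finite_nat_iff_bounded by (elim exE) (rule that)
    have N: "\<And>n. n \<in> e -` (Inl ` (P \<inter> (K' \<times> UNIV))) \<Longrightarrow> n < N"
      using N0 by (simp add: subset_iff)
    show "eventually (\<lambda>n. \<forall>z\<in>K. norm (cc n / (z - bb n)) \<le> 1/2) sequentially"
      unfolding eventually_at_top_linorder
    proof (intro exI[of _ N] allI impI ballI)
      fix n z assume n: "n \<ge> N" and z: "z \<in> K"
      show "norm (cc n / (z - bb n)) \<le> 1/2"
      proof (cases "e n")
        case (Inr m) thus ?thesis by (simp add: cc_def)
      next
        case (Inl x)
        obtain a k where x: "x = (a,k)" by (cases x)
        have aP: "(a,k) \<in> P" using eP Inl x by blast
        hence ai: "\<bar>Im a\<bar> < 1" by (auto simp: P_def strip_def)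
        have "a \<notin> K'"
        proof
          assume "a \<in> K'"
          hence "n \<in> e -` (Inl ` (P \<inter> (K' \<times> UNIV)))" using Inl x aP by auto
          thus False using N n by force
        qed
        hence "norm ((a - bet a) / (z - bet a)) \<le> 1/2"
          using ratio_bound[OF r(1) _ ai] z r(2) by (auto simp: K'_def)
        thus ?thesis using Inl x by (simp add: cc_def bb_def)
      qed
    qed
  qed
  have occ: "{n. bb n + cc n = z} = e -` (Inl ` ({z} \<times> {..<V z}))" if z: "z \<in> strip" for z
  proof (intro set_eqI iffI)
    fix n assume "n \<in> {n. bb n + cc n = z}"
    hence eq: "bb n + cc n = z" by simp
    show "n \<in> e -` (Inl ` ({z} \<times> {..<V z}))"
    proof (cases "e n")
      case (Inr m)
      hence "z = \<i> * 2" using eq bbcc[of n] by simp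
      thus ?thesis using z by (simp add: strip_def)
    next
      case (Inl x)
      obtain a k where x: "x = (a,k)" by (cases x)
      have "a = z" using eq bbcc[of n] Inl x by simp
      moreover have "k < V a" using eP[of n a k] Inl x by (simp add: P_def)
      ultimately show ?thesis using Inl x by auto
    qed
  next
    fix n assume "n \<in> e -` (Inl ` ({z} \<times> {..<V z}))"
    then obtain k where "e n = Inl (z,k)" by auto
    thus "n \<in> {n. bb n + cc n = z}" using bbcc[of n] by simp
  qed
  have card_occ: "card {n. bb n + cc n = z} = V z" if z: "z \<in> strip" for z
  proof -
    have sub: "Inl ` ({z} \<times> {..<V z}) \<subseteq> range e"
      using z unfolding e_range Q_def P_def by auto
    have "card {n. bb n + cc n = z} = card (Inl ` ({z} \<times> {..<V z}) :: (complex \<times> nat + nat) set)"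
      unfolding occ[OF z] by (rule card_vimage_inj[OF e_inj sub])
    also have "\<dots> = card ({z} \<times> {..<V z})" by (intro card_image) auto
    also have "\<dots> = V z" by (simp add: card_cartesian_product)
    finally show ?thesis .
  qed
  show ?thesis
  proof (rule that[of w.W])
    show "w.W holomorphic_on strip" by (rule w.holomorphic)
    fix z assume z: "z \<in> strip"
    show "zorder w.W z = int (V z)" using w.zorder[OF z] card_occ[OF z] by simp
    have "(\<exists>n. bb n + cc n = z) \<longleftrightarrow> {n. bb n + cc n = z} \<noteq> {}" by auto
    also have "\<dots> \<longleftrightarrow> V z > 0"
      using card_occ[OF z] w.finite_occs[OF z] by (metis card_0_eq card.empty gr0I less_irrefl)
    finally show "w.W z = 0 \<longleftrightarrow> V z > 0" using w.zero[OF z] by simp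
  qed
qed


lemma cnj_strip [simp]: "cnj z \<in> strip \<longleftrightarrow> z \<in> strip"
  by (simp add: strip_def)

lemma of_real_strip [simp]: "complex_of_real t \<in> strip"
  by (simp add: strip_def)

lemma convex_strip: "convex strip"
proof -
  have "strip = {x. Im x < 1} \<inter> {x. Im x > -1}" by (auto simp: strip_def)
  thus ?thesis using convex_halfspace_Im_lt convex_halfspace_Im_gt by (metis convex_Int)
qed

lemma connected_strip: "connected strip"
  by (rule convex_connected[OF convex_strip])

lemma star_holo:
  assumes "v holomorphic_on strip"
  shows "star_fun v holomorphic_on strip"
proof -
  have eq: "star_fun v = cnj \<circ> v \<circ> cnj" by (auto simp: star_fun_def fun_eq_iff)
  have "cnj ` strip = strip" by (simp add: image_cnj_conv_vimage_cnj strip_def)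
  thus ?thesis unfolding eq using assms open_strip by (intro holomorphic_on_compose_cnj_cnj) auto
qed

lemma star_star_real: "star_fun v (complex_of_real t) = cnj (v (complex_of_real t))"
  by (simp add: star_fun_def)

lemma cont_R:
  assumes "h holomorphic_on strip" "\<And>t. h (complex_of_real t) = 0" "z \<in> strip"
  shows "h z = 0"
proof (rule analytic_continuation[OF assms(1) open_strip connected_strip, of "range complex_of_real" 0])
  show "range complex_of_real \<subseteq> strip" by auto
  show "(0::complex) \<in> strip" by (simp add: strip_def)
  show "(0::complex) islimpt range complex_of_real"
    unfolding islimpt_approachable
  proof (intro allI impI)
    fix e :: real assume e: "e > 0"
    show "\<exists>x'\<in>range complex_of_real. x' \<noteq> 0 \<and> dist x' 0 < e"
    proof (rule bexI[of _ "complex_of_real (e/2)"])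
      show "complex_of_real (e/2) \<in> range complex_of_real" by (rule rangeI)
    qed (use e in auto)
  qed
qed (use assms in auto)

lemma nz_ev:
  assumes "f holomorphic_on strip" "w0 \<in> strip" "f w0 \<noteq> 0" "z \<in> strip"
  shows "eventually (\<lambda>w. f w \<noteq> 0) (at z)"
  using non_zero_neighbour_alt[OF assms(1) open_strip connected_strip assms(4,2,3)]
  by (rule eventually_mono) auto

lemma nz_freq:
  assumes "f holomorphic_on strip" "w0 \<in> strip" "f w0 \<noteq> 0" "z \<in> strip"
  shows "frequently (\<lambda>w. f w \<noteq> 0) (at z)"
  by (rule eventually_frequently[OF _ nz_ev[OF assms]]) simp

lemma zorder_star:
  assumes hol: "f holomorphic_on strip" and w0: "w0 \<in> strip" "f w0 \<noteq> 0" and z: "z \<in> strip"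
  shows "zorder (star_fun f) z = zorder f (cnj z)"
proof -
  define z0 where "z0 = cnj z"
  have z0: "z0 \<in> strip" using z by (simp add: z0_def)
  have iso: "isolated_singularity_at f z0"
    by (rule isolated_singularity_at_holomorphic[OF _ open_strip z0])
       (rule holomorphic_on_subset[OF hol], auto)
  have ness: "not_essential f z0"
    by (rule not_essential_holomorphic[OF hol z0 open_strip])
  have freq: "frequently (\<lambda>w. f w \<noteq> 0) (at z0)"
    by (rule nz_freq[OF hol w0 z0])
  define g where "g = zor_poly f z0"
  define n where "n = zorder f z0"
  obtain r where r: "r > 0" "g holomorphic_on cball z0 r"
      "\<And>w. w \<in> cball z0 r - {z0} \<Longrightarrow> f w = g w * (w - z0) powi n" and gz0: "g z0 \<noteq> 0"
    using zorder_exist[OF iso ness freq] unfolding g_def n_def by blast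
  have "zorder (star_fun f) z = n"
  proof (rule zorder_eqI[of "ball z r" z "cnj \<circ> g \<circ> cnj"])
    show "open (ball z r)" by simp
    show "z \<in> ball z r" using r by simp
    have sub: "cnj ` ball z r \<subseteq> cball z0 r"
    proof
      fix x assume "x \<in> cnj ` ball z r"
      then obtain y where y: "y \<in> ball z r" "x = cnj y" by blast
      have "dist z0 x = dist z y" unfolding y z0_def dist_norm
        by (metis complex_cnj_diff complex_mod_cnj)
      thus "x \<in> cball z0 r" using y by simp
    qed
    show "(cnj \<circ> g \<circ> cnj) holomorphic_on ball z r"
      by (intro holomorphic_on_compose_cnj_cnj holomorphic_on_subset[OF r(2) sub]) simp
    show "(cnj \<circ> g \<circ> cnj) z \<noteq> 0" using gz0 by (simp add: z0_def)
    fix w assume w: "w \<in> ball z r" "w \<noteq> z"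
    have "cnj w \<in> cball z0 r - {z0}"
    proof -
      have "dist z0 (cnj w) = dist z w" unfolding z0_def dist_norm
        by (metis complex_cnj_diff complex_mod_cnj)
      thus ?thesis using w by (auto simp: z0_def)
    qed
    from r(3)[OF this] have "f (cnj w) = g (cnj w) * (cnj w - z0) powi n" .
    thus "star_fun f w = (cnj \<circ> g \<circ> cnj) w * (w - z) powi n"
      by (simp add: star_fun_def z0_def)
  qed
  thus ?thesis by (simp add: n_def z0_def)
qed


lemma ana_strip: "h holomorphic_on strip \<Longrightarrow> z \<in> strip \<Longrightarrow> h analytic_on {z}"
  using analytic_at open_strip by blast

lemma finzeros:
  assumes "h holomorphic_on strip" "w0 \<in> strip" "h w0 \<noteq> 0" "compact K" "K \<subseteq> strip"
  shows "finite {z\<in>K. h z = 0}"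
proof (cases "h constant_on strip")
  case True
  then obtain y where y: "\<And>x. x \<in> strip \<Longrightarrow> h x = y" by (auto simp: constant_on_def)
  have "{z\<in>K. h z = 0} = {}" using y[of w0] y assms(2,3,5) by auto
  thus ?thesis by (metis finite.emptyI)
next
  case False
  show ?thesis by (rule holomorphic_compact_finite_zeros[OF assms(1) open_strip connected_strip assms(4,5) False])
qed

lemma ev_strip: "z \<in> strip \<Longrightarrow> eventually (\<lambda>w. w \<in> strip) (at z)"
  using open_strip by (intro eventually_at_in_open') auto

theorem corollary3p7:
  assumes "f \<in> H2_strip" and "g \<in> H2_strip"
  shows "(\<forall>t::real. cmod (f (complex_of_real t)) = cmod (g (complex_of_real t))) \<longleftrightarrow>
         (\<exists>u v. u holomorphic_on strip \<and> v holomorphic_on strip \<and>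
            (\<forall>z\<in>strip. f z = u z * v z \<and> g z = u z * star_fun v z))"
proof -
  have hf: "f holomorphic_on strip" and hg: "g holomorphic_on strip"
    using assms by (auto simp: H2_strip_def)
  show ?thesis
  proof
    assume H: "\<forall>t::real. cmod (f (complex_of_real t)) = cmod (g (complex_of_real t))"
    show "\<exists>u v. u holomorphic_on strip \<and> v holomorphic_on strip \<and>
            (\<forall>z\<in>strip. f z = u z * v z \<and> g z = u z * star_fun v z)"
    proof (cases "\<exists>w0\<in>strip. f w0 \<noteq> 0")
      case False
      have g0: "g z = 0" if "z \<in> strip" for z
      proof (rule cont_R[OF hg _ that])
        fix t :: real
        have "f (complex_of_real t) = 0" using False by auto
        thus "g (complex_of_real t) = 0" using H[rule_format, of t] by simp
      qed
      show ?thesis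
        by (rule exI[of _ "\<lambda>_. 0"], rule exI[of _ "\<lambda>_. 0"]) (use False g0 in auto)
    next
      case True
      then obtain w0 where w0: "w0 \<in> strip" "f w0 \<noteq> 0" by blast
      have "\<exists>w1\<in>strip. g w1 \<noteq> 0"
      proof (rule ccontr)
        assume "\<not> (\<exists>w1\<in>strip. g w1 \<noteq> 0)"
        hence "f (complex_of_real t) = 0" for t using H[rule_format, of t] by auto
        hence "f w0 = 0" by (intro cont_R[OF hf _ w0(1)])
        thus False using w0 by simp
      qed
      then obtain w1 where w1: "w1 \<in> strip" "g w1 \<noteq> 0" by blast
      have hfs: "star_fun f holomorphic_on strip" and hgs: "star_fun g holomorphic_on strip"
        using hf hg by (auto intro: star_holo)
      have fs_nz: "star_fun f (cnj w0) \<noteq> 0" using w0 by (simp add: star_fun_def)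
      have gs_nz: "star_fun g (cnj w1) \<noteq> 0" using w1 by (simp add: star_fun_def)
      have E: "f z * star_fun f z = g z * star_fun g z" if z: "z \<in> strip" for z
      proof -
        have "f z * star_fun f z - g z * star_fun g z = 0"
        proof (rule cont_R[of "\<lambda>z. f z * star_fun f z - g z * star_fun g z", OF _ _ z])
          show "(\<lambda>z. f z * star_fun f z - g z * star_fun g z) holomorphic_on strip"
            using hf hg hfs hgs by (intro holomorphic_intros)
          fix t :: real
          have "f t * star_fun f t = complex_of_real ((cmod (f t))\<^sup>2)"
            by (simp only: star_star_real complex_norm_square)
          also have "\<dots> = complex_of_real ((cmod (g t))\<^sup>2)" using H by simp
          also have "\<dots> = g t * star_fun g t"
            by (simp only: star_star_real complex_norm_square)
          finally show "f t * star_fun f t - g t * star_fun g t = 0" by simp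
        qed
        thus ?thesis by simp
      qed
      have fge: "zorder f z \<ge> 0" if "z \<in> strip" for z
        by (rule zorder_ge_0[OF ana_strip[OF hf that] nz_freq[OF hf w0 that]])
      have gge: "zorder g z \<ge> 0" if "z \<in> strip" for z
        by (rule zorder_ge_0[OF ana_strip[OF hg that] nz_freq[OF hg w1 that]])
      have fpos: "zorder f z > 0 \<longleftrightarrow> f z = 0" if "z \<in> strip" for z
        by (rule zorder_pos_iff[OF hf open_strip that nz_freq[OF hf w0 that]])
      have gpos: "zorder g z > 0 \<longleftrightarrow> g z = 0" if "z \<in> strip" for z
        by (rule zorder_pos_iff[OF hg open_strip that nz_freq[OF hg w1 that]])
      have ordsum: "zorder f z + zorder f (cnj z) = zorder g z + zorder g (cnj z)"
        if z: "z \<in> strip" for z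
      proof -
        have "zorder (\<lambda>z. f z * star_fun f z) z = zorder f z + zorder (star_fun f) z"
          by (rule zorder_times_analytic[OF ana_strip[OF hf z] ana_strip[OF hfs z]])
             (use nz_ev[OF hf w0 z] nz_ev[OF hfs _ fs_nz z] w0 in \<open>auto elim: eventually_elim2\<close>)
        moreover have "zorder (\<lambda>z. g z * star_fun g z) z = zorder g z + zorder (star_fun g) z"
          by (rule zorder_times_analytic[OF ana_strip[OF hg z] ana_strip[OF hgs z]])
             (use nz_ev[OF hg w1 z] nz_ev[OF hgs _ gs_nz z] w1 in \<open>auto elim: eventually_elim2\<close>)
        moreover have "zorder (\<lambda>z. f z * star_fun f z) z = zorder (\<lambda>z. g z * star_fun g z) z"
          by (rule zorder_cong[OF eventually_mono[OF ev_strip[OF z]] refl]) (use E in auto)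
        ultimately show ?thesis
          using zorder_star[OF hf w0 z] zorder_star[OF hg w1 z] by simp
      qed
      define M :: "complex \<Rightarrow> nat" where "M = (\<lambda>z. nat (min (zorder f z) (zorder g z)))"
      define V :: "complex \<Rightarrow> nat" where "V = (\<lambda>z. nat (zorder f z) - M z)"
      have finM: "finite {z\<in>K. M z > 0}" if K: "compact K" "K \<subseteq> strip" for K
      proof -
        have "{z\<in>K. M z > 0} \<subseteq> {z\<in>K. f z = 0}"
          using K fpos by (auto simp: M_def)
        thus ?thesis using finzeros[OF hf w0 K] finite_subset by blast
      qed
      have finV: "finite {z\<in>K. V z > 0}" if K: "compact K" "K \<subseteq> strip" for K
      proof -
        have "{z\<in>K. V z > 0} \<subseteq> {z\<in>K. f z = 0}"
        proof (intro subsetI)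
          fix x assume "x \<in> {z\<in>K. V z > 0}"
          hence x: "x \<in> K" "V x > 0" by auto
          hence "zorder f x > 0" by (simp add: V_def)
          hence "f x = 0" using fpos[of x] K(2) x(1) by auto
          thus "x \<in> {z\<in>K. f z = 0}" using x by simp
        qed
        thus ?thesis using finzeros[OF hf w0 K] finite_subset by blast
      qed
      obtain w where hw: "w holomorphic_on strip" and w0': "\<And>z. z \<in> strip \<Longrightarrow> w z = 0 \<longleftrightarrow> M z > 0"
        and wo: "\<And>z. z \<in> strip \<Longrightarrow> zorder w z = int (M z)"
        using strip_weierstrass[of M, OF finM] by blast
      obtain v where hv: "v holomorphic_on strip" and v0': "\<And>z. z \<in> strip \<Longrightarrow> v z = 0 \<longleftrightarrow> V z > 0"
        and vo: "\<And>z. z \<in> strip \<Longrightarrow> zorder v z = int (V z)"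
        using strip_weierstrass[of V, OF finV] by blast
      have f0: "zorder f w0 = 0" by (rule zorder_eq_0I[OF ana_strip[OF hf w0(1)] w0(2)])
      have w_w0: "w w0 \<noteq> 0" using w0'[OF w0(1)] f0 by (simp add: M_def)
      have v_w0: "v w0 \<noteq> 0" using v0'[OF w0(1)] f0 by (simp add: V_def M_def)
      have hwv: "(\<lambda>z. w z * v z) holomorphic_on strip" using hw hv by (intro holomorphic_intros)
      have wv_zero: "w z * v z = 0 \<longleftrightarrow> f z = 0" if z: "z \<in> strip" for z
        using w0'[OF z] v0'[OF z] fpos[OF z] fge[OF z] by (auto simp: M_def V_def)
      have wv_ord: "zorder (\<lambda>z. w z * v z) z = zorder f z" if z: "z \<in> strip" for z
      proof -
        have "zorder (\<lambda>z. w z * v z) z = zorder w z + zorder v z"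
          by (rule zorder_times_analytic[OF ana_strip[OF hw z] ana_strip[OF hv z]])
             (use nz_ev[OF hwv w0(1) _ z] w_w0 v_w0 in auto)
        thus ?thesis using wo[OF z] vo[OF z] fge[OF z] by (simp add: M_def V_def)
      qed
      obtain h1 where h1: "h1 holomorphic_on strip" "\<And>z. z \<in> strip \<Longrightarrow> h1 z \<noteq> 0"
          "\<And>z. z \<in> strip \<Longrightarrow> f z = h1 z * (w z * v z)"
        using holomorphic_zorder_factorization[OF hf open_strip connected_strip hwv wv_zero wv_ord]
        by metis
      define u where "u = (\<lambda>z. h1 z * w z)"
      have hu: "u holomorphic_on strip" unfolding u_def using h1(1) hw by (intro holomorphic_intros)
      have fuv: "f z = u z * v z" if "z \<in> strip" for z using h1(3)[OF that] by (simp add: u_def)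
      have hvs: "star_fun v holomorphic_on strip" by (rule star_holo[OF hv])
      have u_w0: "u w0 \<noteq> 0" using h1(2)[OF w0(1)] w_w0 by (simp add: u_def)
      have vs_nz: "star_fun v (cnj w0) \<noteq> 0" using v_w0 by (simp add: star_fun_def)
      have huvs: "(\<lambda>z. u z * star_fun v z) holomorphic_on strip" using hu hvs by (intro holomorphic_intros)
      have ev_uvs: "eventually (\<lambda>x. u x * star_fun v x \<noteq> 0) (at z)" if z: "z \<in> strip" for z
        using nz_ev[OF hu w0(1) u_w0 z] nz_ev[OF hvs _ vs_nz z] w0(1)
        by (auto elim: eventually_elim2)
      have uvs_ord: "zorder (\<lambda>z. u z * star_fun v z) z = zorder g z" if z: "z \<in> strip" for z
      proof -
        have "zorder (\<lambda>z. u z * star_fun v z) z = zorder u z + zorder (star_fun v) z"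
          by (rule zorder_times_analytic[OF ana_strip[OF hu z] ana_strip[OF hvs z] ev_uvs[OF z]])
        also have "zorder u z = zorder h1 z + zorder w z"
          unfolding u_def
          by (rule zorder_times_analytic[OF ana_strip[OF h1(1) z] ana_strip[OF hw z]])
             (use nz_ev[OF hw w0(1) w_w0 z] ev_strip[OF z] h1(2) in \<open>auto elim: eventually_elim2\<close>)
        also have "zorder h1 z = 0" by (rule zorder_eq_0I[OF ana_strip[OF h1(1) z] h1(2)[OF z]])
        also have "zorder (star_fun v) z = zorder v (cnj z)"
          by (rule zorder_star[OF hv w0(1) v_w0 z])
        also have "zorder v (cnj z) = int (V (cnj z))" using vo z by simp
        also have "0 + zorder w z + int (V (cnj z)) = zorder g z"
        proof -
          have cz: "cnj z \<in> strip" using z by simp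
          have s: "zorder f z + zorder f (cnj z) = zorder g z + zorder g (cnj z)" by (rule ordsum[OF z])
          show ?thesis
            using wo[OF z] fge[OF z] gge[OF z] fge[OF cz] gge[OF cz] s
            by (simp add: M_def V_def min_def split: if_splits)
        qed
        finally show ?thesis .
      qed
      have uvs_zero: "u z * star_fun v z = 0 \<longleftrightarrow> g z = 0" if z: "z \<in> strip" for z
      proof -
        have "u z * star_fun v z = 0 \<longleftrightarrow> zorder (\<lambda>z. u z * star_fun v z) z > 0"
          by (rule zorder_pos_iff[OF huvs open_strip z, symmetric])
             (rule eventually_frequently[OF _ ev_uvs[OF z]], simp)
        thus ?thesis using uvs_ord[OF z] gpos[OF z] by simp
      qed
      obtain k where k: "k holomorphic_on strip" "\<And>z. z \<in> strip \<Longrightarrow> k z \<noteq> 0"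
          "\<And>z. z \<in> strip \<Longrightarrow> g z = k z * (u z * star_fun v z)"
        using holomorphic_zorder_factorization[OF hg open_strip connected_strip huvs uvs_zero uvs_ord]
        by metis
      have hks: "star_fun k holomorphic_on strip" by (rule star_holo[OF k(1)])
      have kk0: "(k z * star_fun k z - 1) * f z = 0" if z: "z \<in> strip" for z
      proof (rule cont_R[of "\<lambda>z. (k z * star_fun k z - 1) * f z", OF _ _ z])
        show "(\<lambda>z. (k z * star_fun k z - 1) * f z) holomorphic_on strip"
          using k(1) hks hf by (intro holomorphic_intros)
        fix t :: real
        show "(k t * star_fun k t - 1) * f t = 0"
        proof (cases "f t = 0")
          case False
          have ft: "f t = u t * v t" by (rule fuv) simp
          have gt: "g t = k t * (u t * cnj (v t))" using k(3)[of t] by (simp add: star_star_real)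
          have "cmod (f t) = cmod (g t)" using H by simp
          hence "cmod (u t) * cmod (v t) = cmod (k t) * (cmod (u t) * cmod (v t))"
            unfolding ft gt by (simp add: norm_mult)
          moreover have "cmod (u t) * cmod (v t) \<noteq> 0" using False ft by (simp add: norm_mult)
          ultimately have "cmod (k t) = 1" by simp
          hence "k t * star_fun k t = 1"
            by (simp add: star_star_real complex_norm_square[symmetric])
          thus ?thesis by simp
        qed simp
      qed
      have kk: "k z * star_fun k z = 1" if z: "z \<in> strip" for z
      proof (rule analytic_continuation_open[of "strip \<inter> f -` (-{0})" strip
                   "\<lambda>z. k z * star_fun k z" "\<lambda>_. 1", OF _ open_strip _ connected_strip _ _ _ _ z])
        show "open (strip \<inter> f -` (- {0}))"
          by (rule continuous_open_preimage[OF holomorphic_on_imp_continuous_on[OF hf] open_strip]) auto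
        show "strip \<inter> f -` (- {0}) \<noteq> {}" using w0 by auto
        show "strip \<inter> f -` (- {0}) \<subseteq> strip" by auto
        show "(\<lambda>z. k z * star_fun k z) holomorphic_on strip" using k(1) hks by (intro holomorphic_intros)
        show "(\<lambda>_. 1) holomorphic_on strip" by (intro holomorphic_intros)
        fix x assume "x \<in> strip \<inter> f -` (- {0})"
        thus "k x * star_fun k x = 1" using kk0[of x] by auto
      qed
      obtain s where hs: "s holomorphic_on strip" and ks: "\<And>z. z \<in> strip \<Longrightarrow> k z = s z ^ 2"
        using contractible_imp_holomorphic_sqrt[OF k(1) convex_imp_contractible[OF convex_strip] k(2)]
        by metis
      have s_nz: "s z \<noteq> 0" if "z \<in> strip" for z using k(2)[OF that] ks[OF that] by auto
      have hss: "star_fun s holomorphic_on strip" by (rule star_holo[OF hs])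
      define phi where "phi = (\<lambda>z. s z * star_fun s z)"
      have phi2: "phi z ^ 2 = 1" if z: "z \<in> strip" for z
      proof -
        have "star_fun s z ^ 2 = star_fun k z"
          using ks[of "cnj z"] z by (simp add: star_fun_def)
        hence "phi z ^ 2 = k z * star_fun k z" using ks[OF z] by (simp add: phi_def power_mult_distrib)
        thus ?thesis using kk[OF z] by simp
      qed
      have "phi constant_on strip"
      proof (rule continuous_finite_range_constant[OF connected_strip])
        show "continuous_on strip phi" unfolding phi_def
          by (intro holomorphic_on_imp_continuous_on holomorphic_intros hs hss)
        have "phi ` strip \<subseteq> {1, -1}"
          using phi2 by (auto simp: power2_eq_1_iff)
        thus "finite (phi ` strip)" using finite_subset by blast
      qed
      then obtain y where y: "\<And>z. z \<in> strip \<Longrightarrow> phi z = y" by (auto simp: constant_on_def)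
      have z0s: "(0::complex) \<in> strip" by (simp add: strip_def)
      have "phi 0 = complex_of_real ((cmod (s 0))\<^sup>2)"
        unfolding phi_def star_fun_def complex_norm_square by simp
      moreover have "phi 0 = 1 \<or> phi 0 = -1" using phi2[OF z0s] by (simp add: power2_eq_1_iff)
      ultimately have "phi 0 = 1"
      proof -
        assume a: "phi 0 = complex_of_real ((cmod (s 0))\<^sup>2)" and b: "phi 0 = 1 \<or> phi 0 = -1"
        have "Re (phi 0) \<ge> 0" using a by simp
        thus ?thesis using b by auto
      qed
      hence phi1: "s z * star_fun s z = 1" if "z \<in> strip" for z
        using y[OF that] y[OF z0s] by (simp add: phi_def)
      show ?thesis
      proof (intro exI conjI ballI)
        show "(\<lambda>z. u z * s z) holomorphic_on strip" using hu hs by (intro holomorphic_intros)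
        show "(\<lambda>z. v z / s z) holomorphic_on strip" using hv hs s_nz by (intro holomorphic_intros) auto
        fix z assume z: "z \<in> strip"
        show "f z = u z * s z * (v z / s z)" using fuv[OF z] s_nz[OF z] by simp
        have st: "star_fun (\<lambda>z. v z / s z) z = star_fun v z / star_fun s z"
          by (simp add: star_fun_def)
        have ss: "star_fun s z = 1 / s z" using phi1[OF z] s_nz[OF z] by (simp add: field_simps)
        have "u z * s z * star_fun (\<lambda>z. v z / s z) z = u z * s z * (star_fun v z / star_fun s z)"
          by (simp only: st)
        also have "\<dots> = u z * s z * (star_fun v z * s z)" using ss s_nz[OF z] by simp
        also have "\<dots> = s z ^ 2 * (u z * star_fun v z)" by (simp add: power2_eq_square mult_ac)
        finally have "u z * s z * star_fun (\<lambda>z. v z / s z) z = s z ^ 2 * (u z * star_fun v z)" .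
        thus "g z = u z * s z * star_fun (\<lambda>z. v z / s z) z"
          using k(3)[OF z] ks[OF z] by (simp only:)
      qed
    qed
  next
    assume "\<exists>u v. u holomorphic_on strip \<and> v holomorphic_on strip \<and>
            (\<forall>z\<in>strip. f z = u z * v z \<and> g z = u z * star_fun v z)"
    then obtain u v where uv: "\<forall>z\<in>strip. f z = u z * v z \<and> g z = u z * star_fun v z" by blast
    show "\<forall>t::real. cmod (f (complex_of_real t)) = cmod (g (complex_of_real t))"
    proof
      fix t :: real
      have "f t = u t * v t" "g t = u t * cnj (v t)" using uv of_real_strip[of t] by (auto simp: star_star_real)
      thus "cmod (f t) = cmod (g t)" by (simp add: norm_mult)
    qed
  qed
qed

end
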